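(* Let $X$ be an $\mathcal M$-set, let $A,B\subset\omega$ be co-infinite, and let $x\in X$ be supported on both $A$ and $B$. Then $x$ is supported on $A\cap B$.
   Context: $\omega=\{1,2,3,\dots\}$, $\mathcal M$ is the monoid of injective maps $\omega\to\omega$, and an $\mathcal M$-set is a set with a left $\mathcal M$-action. For $A\subset\omega$, $\mathcal M_A$ is the submonoid of injections fixing $A$ elementwise; $x\in X$ is supported on $A$ if $f.x=x$ for all $f\in\mathcal M_A$. A set $A\subset\omega$ is co-infinite if $\omega\setminus A$ is infinite. *)

theory Defs
  imports Main
begin

definition omega :: "nat set" where
  "omega = {n. 1 \<le> n}"

text \<open>A map omega to omega is represented
  by a function nat to nat with the canonical convention f 0 = 0 (0 is not in omega),
  so that elements of M correspond bijectively to their representatives.\<close>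
definition injM :: "(nat \<Rightarrow> nat) set" where
  "injM = {f. f ` omega \<subseteq> omega \<and> inj_on f omega \<and> f 0 = 0}"

definition M_set :: "'a set \<Rightarrow> ((nat \<Rightarrow> nat) \<Rightarrow> 'a \<Rightarrow> 'a) \<Rightarrow> bool" where
  "M_set X act \<longleftrightarrow>
     (\<forall>f\<in>injM. \<forall>x\<in>X. act f x \<in> X) \<and>
     (\<forall>x\<in>X. act id x = x) \<and>
     (\<forall>f\<in>injM. \<forall>g\<in>injM. \<forall>x\<in>X. act (f \<circ> g) x = act f (act g x))"

definition M_fix :: "nat set \<Rightarrow> (nat \<Rightarrow> nat) set" where
  "M_fix A = {f \<in> injM. \<forall>a\<in>A. f a = a}"

definition supported_on :: "((nat \<Rightarrow> nat) \<Rightarrow> 'a \<Rightarrow> 'a) \<Rightarrow> 'a \<Rightarrow> nat set \<Rightarrow> bool" where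
  "supported_on act x A \<longleftrightarrow> (\<forall>f\<in>M_fix A. act f x = x)"

definition co_infinite :: "nat set \<Rightarrow> bool" where
  "co_infinite A \<longleftrightarrow> infinite (omega - A)"

end

theory Submission
  imports Defs "HOL-Library.Infinite_Set"
begin

lemma inf_bij:
  fixes S T :: "nat set"
  assumes "infinite S" "infinite T"
  shows "\<exists>e. bij_betw e S T"
proof -
  have "bij_betw (enumerate T \<circ> inv_into UNIV (enumerate S)) S T"
    by (rule bij_betw_trans[OF bij_betw_inv_into[OF bij_enumerate[OF assms(1)]] bij_enumerate[OF assms(2)]])
  then show ?thesis by blast
qed

lemma split_inf:
  fixes S :: "nat set"
  assumes "infinite S"
  shows "\<exists>S1 \<subseteq> S. infinite S1 \<and> infinite (S - S1)"
proof -
  let ?e = "enumerate S"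
  have inj: "inj ?e" using strict_mono_enumerate[OF assms] strict_mono_imp_inj_on by blast
  let ?S1 = "?e ` {n. even n}"
  have "?S1 \<subseteq> S" using enumerate_in_set[OF assms] by auto
  moreover have "infinite ?S1"
  proof
    assume "finite ?S1"
    then have "finite {n::nat. even n}" using inj finite_imageD inj_on_subset by blast
    moreover have "infinite {n::nat. even n}"
      by (metis (mono_tags, lifting) dvd_triv_left infinite_nat_iff_unbounded_le mem_Collect_eq mult_le_mono1 mult_1 one_le_numeral le_trans le_refl order.refl le_add2 nat_le_linear)
    ultimately show False by blast
  qed
  moreover have "infinite (S - ?S1)"
  proof
    have sub: "?e ` {n. odd n} \<subseteq> S - ?S1" using enumerate_in_set[OF assms] inj
      by (auto dest: injD)
    assume "finite (S - ?S1)"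
    then have "finite (?e ` {n. odd n})" using sub finite_subset by blast
    then have "finite {n::nat. odd n}" using inj finite_imageD inj_on_subset by blast
    moreover have "infinite {n::nat. odd n}"
      unfolding infinite_nat_iff_unbounded_le
      by (metis dvd_triv_left le_add2 mem_Collect_eq odd_add odd_one mult.commute)
    ultimately show False by blast
  qed
  ultimately show ?thesis by blast
qed


lemma split_two:
  fixes W D :: "nat set"
  assumes "infinite W" "infinite D"
  shows "\<exists>W1 \<subseteq> W. infinite W1 \<and> infinite (D - W1)"
proof (cases "infinite (W - D)")
  case True
  moreover have "D - (W - D) = D" by blast
  ultimately show ?thesis using assms(2) by (intro exI[of _ "W - D"]) auto
next
  case False
  have "W = (W - D) \<union> (W \<inter> D)" by blast
  then have "infinite (W \<inter> D)" using False assms(1) by (metis finite_UnI)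
  then obtain S1 where S1: "S1 \<subseteq> W \<inter> D" "infinite S1" "infinite (W \<inter> D - S1)"
    using split_inf by blast
  have "W \<inter> D - S1 \<subseteq> D - S1" by blast
  then have "infinite (D - S1)" using S1(3) finite_subset by blast
  then show ?thesis using S1 by (intro exI[of _ S1]) auto
qed

lemma glue:
  assumes A: "A \<subseteq> omega" and ci: "infinite (omega - A)"
    and f: "f \<in> injM" and T: "T \<subseteq> omega" "infinite T" "T \<inter> f ` A = {}"
  shows "\<exists>t\<in>injM. (\<forall>a\<in>A. t a = f a) \<and> t ` (omega - A) = T"
proof -
  obtain e where e: "bij_betw e (omega - A) T" using inf_bij[OF ci T(2)] by blast
  define t where "t n = (if n \<in> omega - A then e n else f n)" for n
  have f0: "f 0 = 0" and fo: "f ` omega \<subseteq> omega" and fi: "inj_on f omega"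
    using f unfolding injM_def by auto
  have z: "0 \<notin> omega" unfolding omega_def by simp
  have img: "t ` (omega - A) = T" using e unfolding t_def bij_betw_def by (auto simp: image_def)
  have "t \<in> injM"
    unfolding injM_def
  proof (intro CollectI conjI)
    show "t ` omega \<subseteq> omega"
      using e T(1) fo A unfolding t_def bij_betw_def by auto
    show "t 0 = 0" using z f0 unfolding t_def by simp
    show "inj_on t omega"
    proof (rule inj_onI)
      fix m n assume m: "m \<in> omega" and n: "n \<in> omega" and eq: "t m = t n"
      show "m = n"
      proof (cases "m \<in> A"; cases "n \<in> A")
        assume "m \<in> A" "n \<in> A"
        then show ?thesis using eq fi A unfolding t_def by (auto dest: inj_onD)
      next
        assume "m \<notin> A" "n \<notin> A"
        then show ?thesis using eq e m n unfolding t_def bij_betw_def by (auto dest: inj_onD)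
      next
        assume "m \<in> A" "n \<notin> A"
        then have "t n \<in> T" "t m \<in> f ` A" using e n unfolding t_def bij_betw_def by auto
        then show ?thesis using eq T(3) by auto
      next
        assume "m \<notin> A" "n \<in> A"
        then have "t m \<in> T" "t n \<in> f ` A" using e m unfolding t_def bij_betw_def by auto
        then show ?thesis using eq T(3) by auto
      qed
    qed
  qed
  moreover have "\<forall>a\<in>A. t a = f a" unfolding t_def by auto
  ultimately show ?thesis using img by blast
qed

lemma L0:
  assumes MX: "M_set X act" and x: "x \<in> X" and sup: "supported_on act x A"
    and g: "g \<in> injM" and t: "t \<in> injM" and agree: "\<forall>a\<in>A. g a = t a"
    and A: "A \<subseteq> omega" and sub: "g ` omega \<subseteq> t ` omega"
  shows "act g x = act t x"
proof -
  have z: "0 \<notin> omega" unfolding omega_def by simp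
  have nz: "n \<notin> omega \<Longrightarrow> n = 0" for n unfolding omega_def by simp
  have g0: "g 0 = 0" and go: "g ` omega \<subseteq> omega" and gi: "inj_on g omega"
    using g unfolding injM_def by auto
  have t0: "t 0 = 0" and to: "t ` omega \<subseteq> omega" and ti: "inj_on t omega"
    using t unfolding injM_def by auto
  define v where "v n = (if n \<in> omega then inv_into omega t (g n) else n)" for n
  have tv: "t (v n) = g n" for n
  proof (cases "n \<in> omega")
    case True
    then have "g n \<in> t ` omega" using sub by auto
    then show ?thesis unfolding v_def using True by (simp add: f_inv_into_f)
  next
    case False
    then show ?thesis using nz[OF False] g0 t0 unfolding v_def by simp
  qed
  have vo: "v n \<in> omega" if "n \<in> omega" for n
  proof -
    have "g n \<in> t ` omega" using sub that by auto
    then show ?thesis unfolding v_def using that by (simp add: inv_into_into)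
  qed
  have "v \<in> injM"
    unfolding injM_def
  proof (intro CollectI conjI)
    show "v ` omega \<subseteq> omega" using vo by auto
    show "v 0 = 0" using z unfolding v_def by simp
    show "inj_on v omega"
      by (rule inj_onI) (metis tv gi inj_onD)
  qed
  moreover have "\<forall>a\<in>A. v a = a"
  proof
    fix a assume a: "a \<in> A"
    then have "t (v a) = t a" using tv agree by simp
    then show "v a = a" using ti vo[of a] a A by (auto dest: inj_onD)
  qed
  ultimately have vM: "v \<in> M_fix A" unfolding M_fix_def by blast
  have "t \<circ> v = g" using tv by auto
  then have "act g x = act t (act v x)" using MX t \<open>v \<in> injM\<close> x unfolding M_set_def by metis
  also have "act v x = x" using sup vM unfolding supported_on_def by blast
  finally show ?thesis .
qed

lemma L:
  assumes MX: "M_set X act" and x: "x \<in> X" and sup: "supported_on act x A"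
    and g: "g \<in> injM" and h: "h \<in> injM" and agree: "\<forall>a\<in>A. g a = h a"
    and A: "A \<subseteq> omega" and ci: "infinite (omega - A)"
  shows "act g x = act h x"
proof -
  have go: "g ` omega \<subseteq> omega" and gi: "inj_on g omega"
    using g unfolding injM_def by auto
  have ho: "h ` omega \<subseteq> omega" and hi: "inj_on h omega"
    using h unfolding injM_def by auto
  let ?T = "g ` (omega - A) \<union> h ` (omega - A)"
  have "infinite (g ` (omega - A))"
    using ci gi by (metis Diff_subset finite_imageD inj_on_subset)
  then have Tinf: "infinite ?T" by simp
  have Tsub: "?T \<subseteq> omega" using go ho by auto
  have hA: "h ` A = g ` A" using agree by auto
  have Tdis: "?T \<inter> g ` A = {}"
  proof -
    have "g ` (omega - A) \<inter> g ` A = {}" using gi A by (auto dest: inj_onD)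
    moreover have "h ` (omega - A) \<inter> h ` A = {}" using hi A by (auto dest: inj_onD)
    ultimately show ?thesis using hA by auto
  qed
  obtain t where t: "t \<in> injM" "\<forall>a\<in>A. t a = g a" "t ` (omega - A) = ?T"
    using glue[OF A ci g Tsub Tinf Tdis] by blast
  have "g ` omega \<subseteq> t ` omega"
  proof
    fix y assume "y \<in> g ` omega"
    then obtain n where n: "n \<in> omega" "y = g n" by blast
    show "y \<in> t ` omega"
    proof (cases "n \<in> A")
      case True then show ?thesis using t(2) n A by (metis image_eqI subsetD)
    next
      case False then have "y \<in> t ` (omega - A)" using t(3) n by auto
      then show ?thesis by auto
    qed
  qed
  then have 1: "act g x = act t x" using L0[OF MX x sup g t(1) _ A] t(2) by auto
  have "h ` omega \<subseteq> t ` omega"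
  proof
    fix y assume "y \<in> h ` omega"
    then obtain n where n: "n \<in> omega" "y = h n" by blast
    show "y \<in> t ` omega"
    proof (cases "n \<in> A")
      case True then show ?thesis using t(2) agree n A by (metis image_eqI subsetD)
    next
      case False then have "y \<in> t ` (omega - A)" using t(3) n by auto
      then show ?thesis by auto
    qed
  qed
  then have 2: "act h x = act t x" using L0[OF MX x sup h t(1) _ A] t(2) agree by auto
  show ?thesis using 1 2 by simp
qed

theorem proposition1p4:
  fixes X :: "'a set" and act :: "(nat \<Rightarrow> nat) \<Rightarrow> 'a \<Rightarrow> 'a"
    and A B :: "nat set" and x :: 'a
  assumes "M_set X act"
    and "A \<subseteq> omega" and "B \<subseteq> omega"
    and "co_infinite A" and "co_infinite B"
    and "x \<in> X"
    and "supported_on act x A" and "supported_on act x B"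
  shows "supported_on act x (A \<inter> B)"
  unfolding supported_on_def
proof
  note MX = assms(1) and Ao = assms(2) and Bo = assms(3) and x = assms(6)
    and sA = assms(7) and sB = assms(8)
  have cA: "infinite (omega - A)" and cB: "infinite (omega - B)"
    using assms(4,5) unfolding co_infinite_def by auto
  fix f assume fM: "f \<in> M_fix (A \<inter> B)"
  then have f: "f \<in> injM" and fR: "\<forall>a\<in>A \<inter> B. f a = a" unfolding M_fix_def by auto
  have fo: "f ` omega \<subseteq> omega" and fi: "inj_on f omega"
    using f unfolding injM_def by auto
  have idM: "id \<in> injM" unfolding injM_def by auto
  have z: "0 \<notin> omega" unfolding omega_def by simp
  let ?W = "omega - f ` A"
  have "f ` (omega - A) \<subseteq> ?W" using fo fi Ao by (auto dest: inj_onD)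
  moreover have "infinite (f ` (omega - A))"
    using cA fi by (metis Diff_subset finite_imageD inj_on_subset)
  ultimately have Winf: "infinite ?W" using finite_subset by blast
  obtain W1 where W1: "W1 \<subseteq> ?W" "infinite W1" "infinite ((omega - B) - W1)"
    using split_two[OF Winf cB] by blast
  obtain g1 where g1: "g1 \<in> injM" "\<forall>a\<in>A. g1 a = f a" "g1 ` (omega - A) = W1"
    using glue[OF Ao cA f _ W1(2)] W1(1) by blast
  obtain h where h: "h \<in> injM" "\<forall>b\<in>B. h b = id b" "h ` (omega - B) = (omega - B) - W1"
    using glue[OF Bo cB idM _ W1(3)] by auto
  define h' where "h' n = (if n \<in> B then g1 n else h n)" for n
  have g1o: "g1 ` omega \<subseteq> omega" and g1i: "inj_on g1 omega"
    using g1(1) unfolding injM_def by auto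
  have ho: "h ` omega \<subseteq> omega" and hi: "inj_on h omega" and h0: "h 0 = 0"
    using h(1) unfolding injM_def by auto
  have cross: "g1 m \<noteq> h n" if m: "m \<in> B" and n: "n \<in> omega - B" for m n
  proof
    assume eq: "g1 m = h n"
    have hn: "h n \<in> (omega - B) - W1" using h(3) n by auto
    show False
    proof (cases "m \<in> A")
      case True
      then have "g1 m = m" using g1(2) fR m by auto
      then show False using eq hn m by auto
    next
      case False
      then have "g1 m \<in> W1" using g1(3) m Bo by auto
      then show False using eq hn by auto
    qed
  qed
  have h'M: "h' \<in> injM"
    unfolding injM_def
  proof (intro CollectI conjI)
    show "h' ` omega \<subseteq> omega" using g1o ho unfolding h'_def by auto
    show "h' 0 = 0" using h0 z Bo unfolding h'_def by auto
    show "inj_on h' omega"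
    proof (rule inj_onI)
      fix m n assume m: "m \<in> omega" and n: "n \<in> omega" and eq: "h' m = h' n"
      show "m = n"
      proof (cases "m \<in> B"; cases "n \<in> B")
        assume "m \<in> B" "n \<in> B"
        then show ?thesis using eq g1i m n unfolding h'_def by (auto dest: inj_onD)
      next
        assume "m \<notin> B" "n \<notin> B"
        then show ?thesis using eq hi m n unfolding h'_def by (auto dest: inj_onD)
      next
        assume "m \<in> B" "n \<notin> B"
        then show ?thesis using eq cross[of m n] n unfolding h'_def by auto
      next
        assume "m \<notin> B" "n \<in> B"
        then show ?thesis using eq cross[of n m] m unfolding h'_def by auto
      qed
    qed
  qed
  have "act f x = act g1 x"
    using L[OF MX x sA f g1(1) _ Ao cA] g1(2) by auto
  also have "\<dots> = act h' x"
    using L[OF MX x sB g1(1) h'M _ Bo cB] unfolding h'_def by auto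
  also have "\<dots> = act h x"
  proof -
    have "\<forall>a\<in>A. h' a = h a"
    proof
      fix a assume a: "a \<in> A"
      show "h' a = h a"
      proof (cases "a \<in> B")
        case True
        then have "h' a = f a" using g1(2) a unfolding h'_def by auto
        also have "\<dots> = a" using fR a True by auto
        finally show ?thesis using h(2) True by simp
      next
        case False then show ?thesis unfolding h'_def by simp
      qed
    qed
    then show ?thesis using L[OF MX x sA h'M h(1) _ Ao cA] by auto
  qed
  also have "\<dots> = x"
    using sB h(1,2) unfolding supported_on_def M_fix_def by auto
  finally show "act f x = x" .
qed

end
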